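(* For the boundary Markov chain started from $M_0=0$ and any integer $n\ge0$, the number of times $t\ge0$ with $M_t=n$ is a geometric random variable with mean \[ \frac{3n+3}{2n+3}\cdot\frac{(n+3/2)_{n+1}}{(n+1)!}, \] and this mean is asymptotic to $c\sqrt n$ as $n\to\infty$ for some constant $c>0$.
   Context: The boundary Markov chain is the Markov chain $(M_n)_{n\ge0}$ on $\{0,1,2,\dots\}$ with $M_{n+1}=M_n+X_n$. Given $M_n=m$, its step $X_n$ has the law \[ \mathbb P(X_n=1\mid M_n=m)=\frac{2m+3}{3m+3}. \] For $1\le k\le m$, \[ \mathbb P(X_n=-k\mid M_n=m)=\frac{2(2k-2)!}{(k-1)!(k+1)!}\cdot\frac{m!^2(2m-2k+1)!}{(m-k)!^2(2m+1)!}. \] The descending factorial is $(x)_k=x(x-1)\cdots(x-k+1)$. *)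

theory Defs
  imports "HOL-Probability.Probability" "HOL-Library.Landau_Symbols"
begin

definition desc_fact :: "real \<Rightarrow> nat \<Rightarrow> real" where
  "desc_fact x k = (\<Prod>i<k. (x - real i))"

definition bmc_trans :: "nat \<Rightarrow> nat \<Rightarrow> real" where
  "bmc_trans m m' =
     (if m' = m + 1 then (2 * real m + 3) / (3 * real m + 3)
      else if m' < m then
        (let k = m - m' in
          (2 * fact (2*k - 2)) / (fact (k - 1) * fact (k + 1)) *
          (fact m ^ 2 * fact (2*m - 2*k + 1)) / (fact (m - k) ^ 2 * fact (2*m + 1)))
      else 0)"

definition boundary_chain :: "'a measure \<Rightarrow> (nat \<Rightarrow> 'a \<Rightarrow> nat) \<Rightarrow> bool" where
  "boundary_chain \<Omega> X \<longleftrightarrow>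
     prob_space \<Omega> \<and>
     (\<forall>t. X t \<in> measurable \<Omega> (count_space UNIV)) \<and>
     measure \<Omega> {\<omega> \<in> space \<Omega>. X 0 \<omega> = 0} = 1 \<and>
     (\<forall>t xs y. length xs = Suc t \<longrightarrow>
        measure \<Omega> {\<omega> \<in> space \<Omega>. (\<forall>i\<le>t. X i \<omega> = xs ! i) \<and> X (Suc t) \<omega> = y}
        = measure \<Omega> {\<omega> \<in> space \<Omega>. \<forall>i\<le>t. X i \<omega> = xs ! i} * bmc_trans (xs ! t) y)"

definition visit_mean :: "nat \<Rightarrow> real" where
  "visit_mean n = (3 * real n + 3) / (2 * real n + 3) *
                  desc_fact (real n + 3/2) (n + 1) / fact (n + 1)"

end

theory Submission
  imports Defs
begin


definition hh :: "nat \<Rightarrow> real" where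
  "hh m = fact (2*m+1) / (fact m ^ 2 * 4 ^ m)"

lemma hh_0: "hh 0 = 1" by (simp add: hh_def)

lemma alg1: "A > 0 \<Longrightarrow> B > 0 \<Longrightarrow> (Q::real) > 0 \<Longrightarrow> (x::real) \<ge> 0 \<Longrightarrow>
  (2 * x + 3) * (2 * x + 2) * A / (((x + 1) * B)^2 * (4 * Q)) = A / (B^2 * Q) * (2 * x + 3) / (2 * x + 2)"
proof -
  assume h: "A > 0" "B > 0" "Q > 0" "x \<ge> 0"
  have p: "(x+1) > 0" "2*x+2 > 0" using h by linarith+
  have q: "((x + 1) * B)^2 * (4 * Q) \<noteq> 0" "B^2 * Q * (2*x+2) \<noteq> 0" using h p by simp_all
  have r: "A / (B^2 * Q) * (2 * x + 3) / (2 * x + 2) = (A * (2*x+3)) / (B^2 * Q * (2*x+2))" by simp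
  show ?thesis unfolding r
    apply (subst frac_eq_eq[OF q])
    by (simp add: algebra_simps power2_eq_square)
qed
lemma hh_Suc: "hh (Suc m) = hh m * (2 * real m + 3) / (2 * real m + 2)"
proof -
  have f1: "(fact (2 * Suc m + 1) :: real) = (2 * real m + 3) * (2 * real m + 2) * fact (2*m+1)"
    by (simp add: algebra_simps numeral_eq_Suc)
  have f2: "(fact (Suc m) :: real) = (real m + 1) * fact m" by (simp add: algebra_simps)
  have f3: "(4::real) ^ Suc m = 4 * 4 ^ m" by simp
  show ?thesis unfolding hh_def f1 f2 f3
    by (rule alg1) auto
qed

lemma hh_pos: "hh m > 0" by (simp add: hh_def)

lemma hh_le_Suc: "hh m \<le> hh (Suc m)"
  using hh_pos[of m] by (simp add: hh_Suc field_simps)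

lemma hh_mono: "a \<le> b \<Longrightarrow> hh a \<le> hh b"
  by (induction b) (auto simp: le_Suc_eq intro: order_trans[OF _ hh_le_Suc])

lemma hh_ge1: "hh m \<ge> 1" using hh_mono[of 0 m] by (simp add: hh_0)

definition cc :: "nat \<Rightarrow> real" where
  "cc k = 2 * fact (2*k-2) / (fact (k-1) * fact (k+1) * 4 ^ k)"

lemma cc_1: "cc (Suc 0) = 1/4" by (simp add: cc_def)

lemma cc_pos: "k \<ge> 1 \<Longrightarrow> cc k > 0" by (simp add: cc_def)

lemma alg3: "A > 0 \<Longrightarrow> B > 0 \<Longrightarrow> C > 0 \<Longrightarrow> (Q::real) > 0 \<Longrightarrow> (x::real) \<ge> 0 \<Longrightarrow>
  2 * ((2*x+2)*(2*x+1)*A) / (((x+1)*B) * ((x+3)*C) * (4*(4*Q))) = 2*A/(B*C*(4*Q)) * (2*(x+1) - 1) / (2*(x+1) + 4)"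
proof -
  assume h: "A > 0" "B > 0" "C > 0" "Q > 0" "x \<ge> 0"
  have p1: "x + 1 > 0" using h by linarith
  have p2: "x + 3 > 0" using h by linarith
  have p3: "2*(x+1)+4 > 0" using h(5) by (simp add: add_pos_nonneg)
  note p = p1 p2 p3
  have q: "((x+1)*B) * ((x+3)*C) * (4*(4*Q)) \<noteq> 0" "B*C*(4*Q) * (2*(x+1) + 4) \<noteq> 0" using h p by simp_all
  have r: "2*A/(B*C*(4*Q)) * (2*(x+1) - 1) / (2*(x+1) + 4) = (2*A*(2*(x+1) - 1)) / (B*C*(4*Q) * (2*(x+1) + 4))" by simp
  show ?thesis unfolding r
    apply (subst frac_eq_eq[OF q])
    by (simp add: algebra_simps)
qed

lemma cc_Suc: assumes "k \<ge> 1" shows "cc (Suc k) = cc k * (2 * real k - 1) / (2 * real k + 4)"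
proof -
  obtain i where k: "k = Suc i" using assms by (cases k) auto
  have e1: "2 * Suc (Suc i) - 2 = Suc (Suc (2*i))" by simp
  have e2: "2 * Suc i - 2 = 2*i" by simp
  have f1: "(fact (Suc (Suc (2*i))) :: real) = (2*real i + 2) * (2 * real i + 1) * fact (2*i)"
    by (simp add: algebra_simps)
  have f2: "(fact (Suc (Suc i) + 1) :: real) = (real i + 3) * fact (Suc i + 1)"
    by (simp add: algebra_simps)
  have f3: "(fact (Suc (Suc i) - 1) :: real) = (real i + 1) * fact (Suc i - 1)" by (simp add: algebra_simps)
  have f4: "(4::real) ^ Suc (Suc i) = 4 * (4 * 4 ^ i)" "(4::real) ^ Suc i = 4 * 4 ^ i" by simp_all
  have "cc (Suc (Suc i)) = 2 * ((2*real i+2)*(2*real i+1)*fact (2*i)) / (((real i+1)*fact (Suc i - 1)) * ((real i+3)*fact (Suc i + 1)) * (4*(4*4^i)))"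
    unfolding cc_def e1 f1 f2 f3 f4 by simp
  also have "\<dots> = 2*fact (2*i)/(fact (Suc i - 1)*fact (Suc i + 1)*(4*4^i)) * (2*(real i+1) - 1) / (2*(real i+1) + 4)"
    by (rule alg3) auto
  also have "\<dots> = cc (Suc i) * (2 * real (Suc i) - 1) / (2 * real (Suc i) + 4)"
    unfolding cc_def e2 f4 by simp
  finally show ?thesis unfolding k .
qed

lemma alg2: "(b::real) \<noteq> 0 \<Longrightarrow> e \<noteq> 0 \<Longrightarrow> f \<noteq> 0 \<Longrightarrow> c \<noteq> 0 \<Longrightarrow> K \<noteq> 0 \<Longrightarrow> Y \<noteq> 0 \<Longrightarrow>
  a / b * (c * d) / (e * f) = a / (b * K) * (d / (e * Y)) / (f / (c * (Y * K)))"
  by (simp add: field_simps)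

lemma trans_down: assumes "y < m" shows "bmc_trans m y = cc (m - y) * hh y / hh m"
proof -
  obtain k where m: "m = y + k" and k: "k \<ge> 1" using assms by (metis le_add_diff_inverse less_imp_le_nat zero_less_diff less_one not_less)
  have a: "m - y = k" "m - k = y" "2*m - 2*k + 1 = 2*y+1" using m by auto
  have b: "y \<noteq> Suc m" using m by auto
  have c: "(4::real) ^ m = 4 ^ y * 4 ^ k" using m by (simp add: power_add)
  have "bmc_trans m y = 2 * fact (2*k - 2) / (fact (k - 1) * fact (k + 1)) *
          (fact m ^ 2 * fact (2*y+1)) / (fact y ^ 2 * fact (2*m + 1))"
    using assms b unfolding bmc_trans_def Let_def a by simp
  also have "\<dots> = 2 * fact (2*k - 2) / (fact (k - 1) * fact (k + 1) * 4^k) *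
          (fact (2*y+1) / (fact y ^ 2 * 4^y)) / (fact (2*m + 1) / (fact m ^ 2 * (4^y * 4^k)))"
    by (rule alg2) auto
  finally show ?thesis unfolding cc_def hh_def a c .
qed

lemma trans_up: "bmc_trans m (Suc m) = 2/3 * hh (Suc m) / hh m"
proof -
  have "2/3 * hh (Suc m) / hh m = 2/3 * (2 * real m + 3) / (2 * real m + 2)"
    using hh_pos[of m] by (simp add: hh_Suc)
  also have "\<dots> = (2 * real m + 3) / (3 * real m + 3)" by (simp add: field_simps)
  finally show ?thesis by (simp add: bmc_trans_def)
qed

lemma trans_zero: "\<not> y < m \<Longrightarrow> y \<noteq> Suc m \<Longrightarrow> bmc_trans m y = 0"
  by (simp add: bmc_trans_def)

definition nu :: "nat \<Rightarrow> nat \<Rightarrow> real" where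
  "nu x y = (if y = Suc x then 2/3 else if y < x then cc (x - y) else 0)"

lemma P_nu: "bmc_trans x y = nu x y * hh y / hh x"
  using hh_pos[of x] by (auto simp: nu_def trans_up trans_down trans_zero)

lemma nu_nonneg: "nu x y \<ge> 0" using cc_pos by (auto simp: nu_def intro: less_imp_le)

lemma P_nonneg: "bmc_trans x y \<ge> 0"
  using nu_nonneg[of x y] hh_pos[of x] hh_pos[of y] by (simp add: P_nu)

lemma nu_shift: "nu (a + s) (z + s) = nu a z"
  by (auto simp: nu_def)

lemma psum_step_r:
  fixes A B j d :: real
  assumes "j \<ge> 1" "d \<ge> 0"
  shows "A * (2 * j - 1) / (2 * j + 4) * B
       = (d + 1) * (2 * j - 1) / (3 * (j + 1 + d + 1)) * A * (B * (2 * d + 3) / (2 * d + 2))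
         - d * (2 * (j+1) - 1) / (3 * (j + 1 + d + 1)) * (A * (2 * j - 1) / (2 * j + 4)) * B"
proof -
  obtain s t w where s: "s = j + 1 + d + 1" and t: "t = d + 1" and w: "w = j + 2" by blast
  have pos: "s > 0" "t > 0" "w > 0" using assms s t w by linarith+
  have e: "2 * d + 2 = 2 * t" "2 * j + 4 = 2 * w" "d = t - 1" "j = w - 2" using t w by auto
  have s': "s = w + t - 1" using s t w by simp
  have "A * (2 * (w-2) - 1) / (2 * w) * B = t * (2 * (w-2) - 1) / (3 * s) * A * (B * (2 * (t-1) + 3) / (2 * t))
       - (t-1) * (2 * ((w-2)+1) - 1) / (3 * s) * (A * (2 * (w-2) - 1) / (2 * w)) * B"
    using pos apply (simp add: field_simps) apply (unfold s') apply (simp add: algebra_simps) done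
  then show ?thesis unfolding s[symmetric] e(1,2) by (simp add: e(3,4))
qed
lemma base_r:
  fixes H x :: real assumes "x \<ge> 0"
  shows "1/4 * H = H * (2*x+3) / (2*x+2) * (x+1) / (3 * ((x+1)+1)) - x * (2*1-1) / (3*((x+1)+1)) * (1/4) * H"
proof -
  obtain uu vv where uu: "uu = x + 1" and vv: "vv = x + 2" by blast
  have pos: "uu > 0" "vv > 0" using assms uu vv by linarith+
  have e: "2*x+2 = 2*uu" "(x+1)+1 = vv" "x = uu - 1" using uu vv by auto
  have vv': "vv = uu + 1" using uu vv by simp
  have "1/4 * H = H * (2*(uu-1)+3) / (2*uu) * uu / (3 * vv) - (uu-1) * (2*1-1) / (3 * vv) * (1/4) * H"
    using pos apply (simp add: field_simps) apply (unfold vv') apply (simp add: algebra_simps) done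
  then show ?thesis unfolding e(1,2) by (simp add: e(3))
qed
lemma harm_r:
  fixes H a :: real assumes "a \<ge> 0"
  shows "2/3 * (H * (2*a+3) / (2*a+2)) + H * a / (3 * (a+1)) = H"
proof -
  obtain u where u: "u = a + 1" by blast
  have pos: "u > 0" using assms u by linarith
  have e: "2*a+2 = 2*u" "a = u - 1" using u by auto
  have "2/3 * (H * (2*(u-1)+3) / (2*u)) + H * (u-1) / (3 * u) = H"
    using pos by (simp add: field_simps; simp add: algebra_simps)
  then show ?thesis unfolding e(1) u[symmetric] using e(2) by simp
qed

lemma psum:
  assumes "1 \<le> j" "j \<le> m"
  shows "(\<Sum>k=1..j. cc k * hh (m-k)) = hh m * real m / (3 * (real m + 1))
           - real (m-j) * (2 * real j - 1) / (3 * (real m + 1)) * cc j * hh (m-j)"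
  using assms
proof (induction j)
  case 0 then show ?case by simp
next
  case (Suc j)
  show ?case
  proof (cases "j = 0")
    case True
    then obtain i where m: "m = Suc i" using Suc by (cases m) auto
    have "1/4 * hh i = hh i * (2*real i+3) / (2*real i+2) * (real i+1) / (3 * ((real i+1)+1)) - real i * (2*1-1) / (3*((real i+1)+1)) * (1/4) * hh i"
      by (rule base_r) simp
    then show ?thesis using True by (simp add: m cc_1 hh_Suc algebra_simps)
  next
    case False
    then have j1: "j \<ge> 1" by simp
    obtain d where m: "m = j + 1 + d" using Suc by (metis Suc_eq_plus1 le_Suc_ex)
    have IH: "(\<Sum>k=1..j. cc k * hh (m-k)) = hh m * real m / (3 * (real m + 1))
           - real (m-j) * (2 * real j - 1) / (3 * (real m + 1)) * cc j * hh (m-j)"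
      using Suc j1 by simp
    have e1: "m - j = Suc d" "m - Suc j = d" using m by auto
    have S1: "(\<Sum>k=1..Suc j. cc k * hh (m-k)) = (\<Sum>k=1..j. cc k * hh (m-k)) + cc (Suc j) * hh d"
      using e1 by simp
    have C: "cc (Suc j) = cc j * (2*real j - 1)/(2*real j + 4)" by (rule cc_Suc[OF j1])
    have Hd: "hh (m - j) = hh d * (2*real d+3)/(2*real d+2)" unfolding e1 hh_Suc ..
    have rm: "real (m - j) = real d + 1" unfolding e1 by simp
    have rm2: "real (m - Suc j) = real d" unfolding e1 by simp
    have M: "real m + 1 = real j + 1 + real d + 1" using m by simp
    have X: "cc j * (2 * real j - 1) / (2 * real j + 4) * hh d
       = (real d + 1) * (2 * real j - 1) / (3 * (real m + 1)) * cc j * (hh d * (2 * real d + 3) / (2 * real d + 2))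
         - real d * (2 * (real j+1) - 1) / (3 * (real m + 1)) * (cc j * (2 * real j - 1) / (2 * real j + 4)) * hh d"
      unfolding M by (rule psum_step_r) (use j1 in auto)
    have Y: "real (m - j) * (2 * real j - 1) / (3 * (real m + 1)) * cc j * hh (m-j)
           = (real d + 1) * (2 * real j - 1) / (3 * (real m + 1)) * cc j * (hh d * (2 * real d + 3) / (2 * real d + 2))"
      unfolding rm Hd ..
    have Z: "real (m - Suc j) * (2 * real (Suc j) - 1) / (3 * (real m + 1)) * cc (Suc j) * hh (m - Suc j)
           = real d * (2 * (real j+1) - 1) / (3 * (real m + 1)) * (cc j * (2 * real j - 1) / (2 * real j + 4)) * hh d"
      unfolding rm2 C e1 by simp
    have W: "cc (Suc j) * hh d = cc j * (2 * real j - 1) / (2 * real j + 4) * hh d" unfolding C ..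
    show ?thesis unfolding S1 IH Y Z W X by simp
  qed
qed

lemma harm: "2/3 * hh (Suc a) + (\<Sum>k=1..a. cc k * hh (a-k)) = hh a"
proof (cases "a = 0")
  case True then show ?thesis by (simp add: hh_Suc hh_0)
next
  case False
  then have "(\<Sum>k=1..a. cc k * hh (a-k)) = hh a * real a / (3 * (real a + 1))"
    using psum[of a a] by simp
  moreover have "2/3 * (hh a * (2*real a+3) / (2*real a+2)) + hh a * real a / (3 * (real a+1)) = hh a"
    by (rule harm_r) simp
  ultimately show ?thesis unfolding hh_Suc by simp
qed

lemma reidx: "(\<Sum>y<(m::nat). F y) = (\<Sum>k=1..m. F (m-k))"
  apply (rule sum.reindex_bij_witness[where i = "\<lambda>k. m - k" and j = "\<lambda>y. m - y"])
  apply auto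
  done

lemma nu_row: "(\<Sum>y<Suc (Suc a). nu a y * hh y) = hh a"
proof -
  have "(\<Sum>y<Suc (Suc a). nu a y * hh y) = (\<Sum>y<a. nu a y * hh y) + 2/3 * hh (Suc a)"
    by (simp add: nu_def)
  also have "(\<Sum>y<a. nu a y * hh y) = (\<Sum>k=1..a. nu a (a-k) * hh (a-k))" by (rule reidx)
  also have "\<dots> = (\<Sum>k=1..a. cc k * hh (a-k))"
    by (rule sum.cong) (auto simp: nu_def)
  finally show ?thesis using harm[of a] by simp
qed

lemma row_sum: "(\<Sum>y<Suc (Suc x). bmc_trans x y) = 1"
proof -
  have "(\<Sum>y<Suc (Suc x). bmc_trans x y) = (\<Sum>y<Suc (Suc x). nu x y * hh y / hh x)"
    by (rule sum.cong) (simp_all add: P_nu)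
  also have "\<dots> = (\<Sum>y<Suc (Suc x). nu x y * hh y) / hh x"
    by (simp only: sum_divide_distrib)
  finally show ?thesis using nu_row[of x] hh_pos[of x] by simp
qed



definition gg :: "nat \<Rightarrow> nat \<Rightarrow> real" where
  "gg n x = (if n < x then hh (x - Suc n) / hh x else 0)"

definition HH :: "nat \<Rightarrow> nat \<Rightarrow> real" where
  "HH n x = 1 - gg n x"

definition pp :: "nat \<Rightarrow> real" where
  "pp n = 2 / (3 * hh n)"

abbreviation PS :: "nat \<Rightarrow> (nat \<Rightarrow> real) \<Rightarrow> real" where
  "PS x f \<equiv> (\<Sum>y<Suc (Suc x). bmc_trans x y * f y)"

lemma PS_nu: "PS x f = (\<Sum>y<Suc (Suc x). nu x y * (hh y * f y)) / hh x"
proof -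
  have "PS x f = (\<Sum>y<Suc (Suc x). nu x y * (hh y * f y) / hh x)"
    by (rule sum.cong) (simp_all add: P_nu)
  also have "\<dots> = (\<Sum>y<Suc (Suc x). nu x y * (hh y * f y)) / hh x"
    by (simp only: sum_divide_distrib)
  finally show ?thesis .
qed

lemma gg_nonneg: "gg n x \<ge> 0"
  using hh_pos by (auto simp: gg_def intro: divide_nonneg_pos less_imp_le)

lemma gg_le1: "gg n x \<le> 1"
  using hh_pos[of x] hh_mono[of "x - Suc n" x] by (auto simp: gg_def)

lemma HH_range: "0 \<le> HH n x" "HH n x \<le> 1"
  using gg_nonneg[of n x] gg_le1[of n x] by (auto simp: HH_def)

lemma HH_low: "x \<le> n \<Longrightarrow> HH n x = 1" by (simp add: HH_def gg_def)

lemma pp_range: "0 < pp n" "pp n \<le> 1"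
  using hh_ge1[of n] by (auto simp: pp_def field_simps)

lemma sum_shift_split:
  "(\<Sum>y<Suc n + k. f y) = (\<Sum>y<Suc n. f y) + (\<Sum>z<k. f (z + Suc n))"
proof -
  have a: "(\<Sum>y<Suc n + k. f y) = sum f {0..<Suc n + k}" by (simp only: lessThan_atLeast0)
  have b: "sum f {0..<Suc n + k} = sum f {0..<Suc n} + sum f {Suc n..<Suc n + k}"
    by (rule sum.atLeastLessThan_concat[symmetric]) auto
  have c: "sum f {Suc n..<Suc n + k} = sum (\<lambda>z. f (z + Suc n)) {0..<k}"
    using sum.shift_bounds_nat_ivl[of f 0 "Suc n" k] by (simp add: add.commute)
  show ?thesis unfolding a b c by (simp only: lessThan_atLeast0)
qed

lemma P_gg: "PS x (gg n) = gg n x + (if x = n then pp n else 0)"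
proof (cases "x < n")
  case True
  have "PS x (gg n) = 0"
    by (rule sum.neutral) (use True in \<open>auto simp: gg_def\<close>)
  then show ?thesis using True by (simp add: gg_def)
next
  case False
  note nf = False
  show ?thesis
  proof (cases "x = n")
    case True
    have "PS x (gg n) = bmc_trans n (Suc n) * gg n (Suc n)"
      using True by (simp add: gg_def)
    also have "\<dots> = pp n" using hh_pos[of n] hh_pos[of "Suc n"]
      by (simp add: trans_up gg_def hh_0 pp_def)
    finally show ?thesis using True by (simp add: gg_def)
  next
    case False
    then obtain a where x: "x = Suc n + a" using nf by (metis add_Suc less_imp_Suc_add linorder_neqE_nat)
    have "PS x (gg n) = (\<Sum>y<Suc (Suc x). nu x y * (hh y * gg n y)) / hh x" by (rule PS_nu)
    also have "(\<Sum>y<Suc (Suc x). nu x y * (hh y * gg n y)) = (\<Sum>y<Suc n + Suc (Suc a). nu x y * (hh y * gg n y))"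
      by (simp add: x)
    also have "\<dots> = (\<Sum>y<Suc n. nu x y * (hh y * gg n y)) + (\<Sum>z<Suc (Suc a). nu x (z + Suc n) * (hh (z + Suc n) * gg n (z + Suc n)))"
      by (rule sum_shift_split)
    also have "(\<Sum>y<Suc n. nu x y * (hh y * gg n y)) = 0"
      by (rule sum.neutral) (auto simp: gg_def)
    also have "(\<Sum>z<Suc (Suc a). nu x (z + Suc n) * (hh (z + Suc n) * gg n (z + Suc n))) = (\<Sum>z<Suc (Suc a). nu a z * hh z)"
    proof (rule sum.cong)
      fix z assume "z \<in> {..<Suc (Suc a)}"
      have "nu x (z + Suc n) = nu a z" unfolding x using nu_shift[of a "Suc n" z] by (simp add: add.commute)
      moreover have "hh (z + Suc n) * gg n (z + Suc n) = hh z" using hh_pos[of "z + Suc n"] by (simp add: gg_def)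
      ultimately show "nu x (z + Suc n) * (hh (z + Suc n) * gg n (z + Suc n)) = nu a z * hh z" by simp
    qed simp
    also have "\<dots> = hh a" by (rule nu_row)
    finally show ?thesis using False x by (simp add: gg_def)
  qed
qed

lemma P_const: "PS x (\<lambda>y. c) = c"
  using row_sum[of x] by (simp add: sum_distrib_right[symmetric])

lemma PS_diff: "PS x (\<lambda>y. f y - g y) = PS x f - PS x g"
  by (simp add: algebra_simps sum_subtractf)

lemma P_HH: "PS x (HH n) = HH n x - (if x = n then pp n else 0)"
proof -
  have "PS x (HH n) = PS x (\<lambda>y. 1) - PS x (gg n)" unfolding HH_def by (rule PS_diff)
  also have "PS x (\<lambda>y. 1) = 1" by (rule P_const)
  also have "PS x (gg n) = gg n x + (if x = n then pp n else 0)" by (rule P_gg)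
  finally show ?thesis by (simp add: HH_def)
qed

lemma PS_mono: "(\<And>y. y < Suc (Suc x) \<Longrightarrow> f y \<le> g y) \<Longrightarrow> PS x f \<le> PS x g"
  by (rule sum_mono) (auto intro: mult_left_mono P_nonneg)

lemma PS_nonneg: "(\<And>y. f y \<ge> 0) \<Longrightarrow> PS x f \<ge> 0"
  by (rule sum_nonneg) (auto intro!: mult_nonneg_nonneg P_nonneg)



declare sum.lessThan_Suc[simp del]

fun PT :: "nat \<Rightarrow> (nat \<Rightarrow> real) \<Rightarrow> nat \<Rightarrow> real" where
  "PT 0 f x = f x"
| "PT (Suc T) f x = PS x (PT T f)"

lemma PS_cong: "(\<And>y. f y = g y) \<Longrightarrow> PS x f = PS x g" by simp

lemma PT_mono: "(\<And>y. f y \<le> g y) \<Longrightarrow> PT T f x \<le> PT T g x"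
proof (induction T arbitrary: x)
  case 0 then show ?case by simp
next
  case (Suc T) then show ?case by (simp del: sum.lessThan_Suc add: PS_mono)
qed

lemma PT_nonneg: "(\<And>y. f y \<ge> 0) \<Longrightarrow> PT T f x \<ge> 0"
proof (induction T arbitrary: x)
  case 0 then show ?case by simp
next
  case (Suc T) then show ?case by (simp del: sum.lessThan_Suc add: PS_nonneg)
qed

lemma PS_add: "PS x (\<lambda>y. f y + g y) = PS x f + PS x g"
  by (simp del: sum.lessThan_Suc add: distrib_left sum.distrib)

lemma PS_cmult: "PS x (\<lambda>y. f y * c) = PS x f * c"
  by (simp del: sum.lessThan_Suc add: sum_distrib_right mult.assoc)

lemma PS_div: "PS x (\<lambda>y. f y / c) = PS x f / c"
  by (simp del: sum.lessThan_Suc add: sum_divide_distrib)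

lemma PT_add: "PT T (\<lambda>y. f y + g y) x = PT T f x + PT T g x"
proof (induction T arbitrary: x)
  case 0 then show ?case by simp
next
  case (Suc T)
  have "PT (Suc T) (\<lambda>y. f y + g y) x = PS x (\<lambda>y. PT T f y + PT T g y)"
    using Suc by (simp del: sum.lessThan_Suc)
  also have "\<dots> = PS x (PT T f) + PS x (PT T g)" by (rule PS_add)
  finally show ?case by simp
qed

lemma PT_const: "PT T (\<lambda>y. c) x = c"
proof (induction T arbitrary: x)
  case 0 then show ?case by simp
next
  case (Suc T) then show ?case using P_const[of x c] by (simp del: sum.lessThan_Suc)
qed

lemma PT_sum: "finite A \<Longrightarrow> PT T (\<lambda>z. \<Sum>y\<in>A. f y z) x = (\<Sum>y\<in>A. PT T (f y) x)"
proof (induction A rule: finite_induct)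
  case empty then show ?case using PT_const[of T 0 x] by simp
next
  case (insert a A)
  then show ?case by (simp add: PT_add)
qed

definition ind :: "nat \<Rightarrow> nat \<Rightarrow> real" where "ind y z = (if z = y then 1 else 0)"

lemma PS_sum_swap: "PS x (\<lambda>z. \<Sum>t<T. F t z) = (\<Sum>t<T. PS x (F t))"
  by (simp del: sum.lessThan_Suc add: sum_distrib_left sum.swap[of _ "{..<T}"])

lemma green: "(\<Sum>t<T. PT t (ind y) x) \<le> HH y x / pp y"
proof (induction T arbitrary: x)
  case 0 then show ?case using HH_range[of y x] pp_range[of y] by simp
next
  case (Suc T)
  have "(\<Sum>t<Suc T. PT t (ind y) x) = ind y x + (\<Sum>t<T. PT (Suc t) (ind y) x)"
    by (simp only: sum.lessThan_Suc_shift PT.simps(1))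
  also have "(\<Sum>t<T. PT (Suc t) (ind y) x) = (\<Sum>t<T. PS x (PT t (ind y)))" by simp
  also have "\<dots> = PS x (\<lambda>z. \<Sum>t<T. PT t (ind y) z)" by (rule PS_sum_swap[symmetric])
  also have "\<dots> \<le> PS x (\<lambda>z. HH y z / pp y)" by (rule PS_mono) (rule Suc.IH)
  also have "\<dots> = PS x (HH y) / pp y" by (rule PS_div)
  also have "\<dots> = (HH y x - (if x = y then pp y else 0)) / pp y" by (simp only: P_HH)
  finally have le: "(\<Sum>t<Suc T. PT t (ind y) x) \<le> ind y x + (HH y x - (if x = y then pp y else 0)) / pp y" by simp
  have "ind y x + (HH y x - (if x = y then pp y else 0)) / pp y = HH y x / pp y"
    using pp_range[of y] by (auto simp: ind_def diff_divide_distrib)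
  then show ?case using le by simp
qed

lemma PT_ind_tendsto: "(\<lambda>T. PT T (ind y) x) \<longlonglongrightarrow> 0"
proof -
  have "summable (\<lambda>T. PT T (ind y) x)"
    by (rule summableI_nonneg_bounded[where x = "HH y x / pp y"])
       (auto intro!: PT_nonneg green simp: ind_def)
  then show ?thesis by (rule summable_LIMSEQ_zero)
qed

lemma hh_incr: "hh (a + d) - hh a \<le> real d * hh (a + d) / (2 * real a + 2)"
proof (induction d)
  case 0 then show ?case by simp
next
  case (Suc d)
  have pa: "2 * real a + 2 > 0" by simp
  have s1: "hh (a + Suc d) - hh (a + d) = hh (a + d) / (2 * real (a + d) + 2)"
  proof -
    have q: "2 * real (a + d) + 2 > 0" by simp
    show ?thesis using q by (simp add: hh_Suc field_simps)
  qed
  have s2: "hh (a + d) / (2 * real (a + d) + 2) \<le> hh (a + d) / (2 * real a + 2)"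
    using hh_pos[of "a+d"] by (intro divide_left_mono) auto
  have s3: "hh (a + d) \<le> hh (a + Suc d)" by (rule hh_mono) simp
  have "hh (a + Suc d) - hh a = (hh (a + Suc d) - hh (a + d)) + (hh (a + d) - hh a)" by simp
  also have "\<dots> \<le> hh (a + d) / (2 * real a + 2) + real d * hh (a + d) / (2 * real a + 2)"
    using s1 s2 Suc.IH by linarith
  also have "\<dots> = (hh (a + d) + real d * hh (a + d)) / (2 * real a + 2)" by (simp only: add_divide_distrib)
  also have "\<dots> = (real d + 1) * hh (a + d) / (2 * real a + 2)" by (simp add: algebra_simps)
  also have "\<dots> \<le> (real d + 1) * hh (a + Suc d) / (2 * real a + 2)"
    using s3 pa by (intro divide_right_mono mult_left_mono) auto
  finally show ?case by (simp add: add.commute)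
qed

lemma HH_small: assumes "n < x" shows "HH n x \<le> (real n + 1) / (2 * (real x - real n))"
proof -
  obtain a where x: "x = Suc n + a" using assms less_imp_Suc_add by blast
  have "HH n x = (hh (a + Suc n) - hh a) / hh (a + Suc n)"
    using hh_pos[of x] by (simp add: HH_def gg_def x field_simps add.commute)
  also have "\<dots> \<le> (real (Suc n) * hh (a + Suc n) / (2 * real a + 2)) / hh (a + Suc n)"
    using hh_pos[of "a + Suc n"] hh_incr[of a "Suc n"] by (intro divide_right_mono) auto
  also have "\<dots> = real (Suc n) / (2 * real a + 2)"
    using hh_pos[of "a + Suc n"] by (simp only: divide_divide_eq_left mult_divide_mult_cancel_right)
  also have "\<dots> = (real n + 1) / (2 * (real x - real n))"
    by (simp add: x algebra_simps)
  finally show ?thesis .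
qed

lemma PT_HH_tendsto: "(\<lambda>T. PT T (HH n) x) \<longlonglongrightarrow> 0"
proof (rule LIMSEQ_I)
  fix r :: real assume r: "r > 0"
  obtain N :: nat where N: "(real n + 1) / (r/2) < real N" using reals_Archimedean2 by blast
  define K where "K = n + N + 1"
  have eps: "(real n + 1) / (2 * (real K - real n)) < r / 2"
  proof -
    have "real K - real n = real N + 1" by (simp add: K_def)
    moreover have "(real n + 1) < real N * (r/2)" using N r by (simp add: divide_less_eq)
    ultimately show ?thesis using r by (simp add: field_simps)
  qed
  define indK where "indK = (\<lambda>z. \<Sum>y<Suc K. ind y z)"
  have bnd: "HH n z \<le> indK z + (real n + 1) / (2 * (real K - real n))" for z
  proof (cases "z \<le> K")
    case True
    then have "indK z = 1" unfolding indK_def ind_def by (simp add: sum.delta' less_Suc_eq_le)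
    moreover have "(real n + 1) / (2 * (real K - real n)) \<ge> 0" by (simp add: K_def)
    ultimately show ?thesis using HH_range[of n z] by linarith
  next
    case False
    then have "indK z = 0" unfolding indK_def ind_def by (simp add: sum.delta')
    moreover have "HH n z \<le> (real n + 1) / (2 * (real z - real n))"
      using False by (intro HH_small) (simp add: K_def)
    moreover have "(real n + 1) / (2 * (real z - real n)) \<le> (real n + 1) / (2 * (real K - real n))"
      using False by (intro divide_left_mono) (auto simp: K_def)
    ultimately show ?thesis by linarith
  qed
  have lim: "(\<lambda>T. PT T indK x) \<longlonglongrightarrow> 0"
  proof -
    have "(\<lambda>T. \<Sum>y<Suc K. PT T (ind y) x) \<longlonglongrightarrow> 0"
      by (rule tendsto_null_sum) (rule PT_ind_tendsto)
    moreover have "PT T indK x = (\<Sum>y<Suc K. PT T (ind y) x)" for T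
      unfolding indK_def by (rule PT_sum) simp
    ultimately show ?thesis by simp
  qed
  then have "\<forall>\<^sub>F T in sequentially. PT T indK x < r/2"
    using r by (intro order_tendstoD(2)) auto
  then obtain T0 where T0: "\<And>T. T \<ge> T0 \<Longrightarrow> PT T indK x < r/2" by (auto simp: eventually_sequentially)
  show "\<exists>no. \<forall>T\<ge>no. norm (PT T (HH n) x - 0) < r"
  proof (intro exI allI impI)
    fix T assume "T \<ge> T0"
    have "PT T (HH n) x \<le> PT T (\<lambda>z. indK z + (real n + 1) / (2 * (real K - real n))) x"
      by (rule PT_mono) (rule bnd)
    also have "\<dots> = PT T indK x + (real n + 1) / (2 * (real K - real n))"
      by (simp only: PT_add PT_const)
    finally have "PT T (HH n) x < r" using T0[OF \<open>T \<ge> T0\<close>] eps by linarith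
    moreover have "PT T (HH n) x \<ge> 0" by (rule PT_nonneg) (rule HH_range)
    ultimately show "norm (PT T (HH n) x - 0) < r" by simp
  qed
qed



fun Paths :: "nat \<Rightarrow> nat \<Rightarrow> nat list set" where
  "Paths x 0 = {[x]}"
| "Paths x (Suc T) = (\<Union>y\<in>{..<Suc (Suc x)}. (\<lambda>ys. x # ys) ` Paths y T)"

fun wt :: "nat list \<Rightarrow> real" where
  "wt [] = 1"
| "wt [x] = 1"
| "wt (x # y # ys) = bmc_trans x y * wt (y # ys)"

fun cnt :: "nat \<Rightarrow> nat list \<Rightarrow> nat" where
  "cnt n [] = 0"
| "cnt n (x # xs) = (if x = n then 1 else 0) + cnt n xs"

lemma Paths_finite: "finite (Paths x T)"
  by (induction T arbitrary: x) auto

lemma Paths_shape: "xs \<in> Paths x T \<Longrightarrow> xs \<noteq> [] \<and> hd xs = x \<and> length xs = Suc T"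
  by (induction T arbitrary: x xs) auto

lemma sum_Paths_Suc:
  "(\<Sum>xs\<in>Paths x (Suc T). F xs) = (\<Sum>y<Suc (Suc x). \<Sum>ys\<in>Paths y T. F (x # ys))"
proof -
  have "(\<Sum>xs\<in>Paths x (Suc T). F xs) = (\<Sum>y<Suc (Suc x). \<Sum>xs\<in>(\<lambda>ys. x # ys) ` Paths y T. F xs)"
    unfolding Paths.simps
  proof (rule sum.UNION_disjoint)
    show "finite {..<Suc (Suc x)}" by simp
    show "\<forall>i\<in>{..<Suc (Suc x)}. finite ((#) x ` Paths i T)" by (simp add: Paths_finite)
    show "\<forall>i\<in>{..<Suc (Suc x)}. \<forall>j\<in>{..<Suc (Suc x)}. i \<noteq> j \<longrightarrow> (#) x ` Paths i T \<inter> (#) x ` Paths j T = {}"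
    proof (intro ballI impI)
      fix i j :: nat assume ij: "i \<noteq> j"
      show "(#) x ` Paths i T \<inter> (#) x ` Paths j T = {}"
      proof (rule equals0I)
        fix zs assume "zs \<in> (#) x ` Paths i T \<inter> (#) x ` Paths j T"
        then obtain ys where "ys \<in> Paths i T" "ys \<in> Paths j T" by auto
        then show False using Paths_shape[of ys i T] Paths_shape[of ys j T] ij by auto
      qed
    qed
  qed
  also have "\<dots> = (\<Sum>y<Suc (Suc x). \<Sum>ys\<in>Paths y T. F (x # ys))"
    by (rule sum.cong) (auto simp: sum.reindex)
  finally show ?thesis .
qed

lemma wt_Cons: "ys \<noteq> [] \<Longrightarrow> wt (x # ys) = bmc_trans x (hd ys) * wt ys"
  by (cases ys) auto

definition QQ :: "nat \<Rightarrow> nat \<Rightarrow> nat \<Rightarrow> nat \<Rightarrow> real" where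
  "QQ n T x j = (\<Sum>xs\<in>Paths x T. wt xs * (if j \<le> cnt n xs then 1 else 0))"

lemma QQ_0: "QQ n 0 x j = (if j \<le> (if x = n then 1 else 0) then 1 else 0)"
  by (simp add: QQ_def)

lemma QQ_Suc: "QQ n (Suc T) x j = PS x (\<lambda>y. QQ n T y (j - (if x = n then 1 else 0)))"
proof -
  have "QQ n (Suc T) x j = (\<Sum>y<Suc (Suc x). \<Sum>ys\<in>Paths y T. wt (x # ys) * (if j \<le> cnt n (x # ys) then 1 else 0))"
    unfolding QQ_def by (rule sum_Paths_Suc)
  also have "\<dots> = (\<Sum>y<Suc (Suc x). bmc_trans x y * (\<Sum>ys\<in>Paths y T. wt ys * (if j - (if x = n then 1 else 0) \<le> cnt n ys then 1 else 0)))"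
  proof (rule sum.cong)
    fix y assume "y \<in> {..<Suc (Suc x)}"
    have "(\<Sum>ys\<in>Paths y T. wt (x # ys) * (if j \<le> cnt n (x # ys) then 1 else 0))
        = (\<Sum>ys\<in>Paths y T. bmc_trans x y * (wt ys * (if j - (if x = n then 1 else 0) \<le> cnt n ys then 1 else 0)))"
    proof (rule sum.cong)
      fix ys assume "ys \<in> Paths y T"
      then have "ys \<noteq> []" "hd ys = y" using Paths_shape by auto
      then show "wt (x # ys) * (if j \<le> cnt n (x # ys) then 1 else 0) = bmc_trans x y * (wt ys * (if j - (if x = n then 1 else 0) \<le> cnt n ys then 1 else 0))"
        by (auto simp: wt_Cons)
    qed simp
    then show "(\<Sum>ys\<in>Paths y T. wt (x # ys) * (if j \<le> cnt n (x # ys) then 1 else 0))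
        = bmc_trans x y * (\<Sum>ys\<in>Paths y T. wt ys * (if j - (if x = n then 1 else 0) \<le> cnt n ys then 1 else 0))"
      by (simp add: sum_distrib_left)
  qed simp
  finally show ?thesis unfolding QQ_def .
qed

definition VV :: "nat \<Rightarrow> nat \<Rightarrow> nat \<Rightarrow> real" where
  "VV n x j = (if j = 0 then 1 else HH n x * (1 - pp n) ^ (j - 1))"

lemma VV_range: "0 \<le> VV n x j" "VV n x j \<le> 1"
proof -
  have r: "0 \<le> 1 - pp n" "1 - pp n \<le> 1" using pp_range[of n] by auto
  have "0 \<le> (1 - pp n) ^ (j - 1)" "(1 - pp n) ^ (j - 1) \<le> 1" using r by (auto intro: power_le_one)
  then show "0 \<le> VV n x j" "VV n x j \<le> 1" using HH_range[of n x] unfolding VV_def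
    by (auto intro: mult_le_one)
qed

lemma VV_le_HH: "j \<ge> 1 \<Longrightarrow> VV n x j \<le> HH n x"
proof -
  assume j: "j \<ge> 1"
  have r: "0 \<le> 1 - pp n" "1 - pp n \<le> 1" using pp_range[of n] by auto
  have "(1 - pp n) ^ (j - 1) \<le> 1" using r by (auto intro: power_le_one)
  then show ?thesis using j HH_range[of n x] unfolding VV_def
    by (simp add: mult_left_le)
qed

lemma VV_harm: "PS x (\<lambda>y. VV n y (j - (if x = n then 1 else 0))) = VV n x j"
proof (cases "j = 0")
  case True then show ?thesis using P_const[of x 1] by (simp add: VV_def)
next
  case False
  show ?thesis
  proof (cases "x = n")
    case xn: True
    show ?thesis
    proof (cases "j = 1")
      case True then show ?thesis using xn P_const[of x 1] by (simp add: VV_def HH_low)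
    next
      case False
      then have "j - 1 \<noteq> 0" using \<open>j \<noteq> 0\<close> by simp
      then have "PS x (\<lambda>y. VV n y (j - 1)) = PS x (\<lambda>y. HH n y * (1 - pp n) ^ (j - 1 - 1))"
        by (simp add: VV_def)
      also have "\<dots> = PS x (HH n) * (1 - pp n) ^ (j - 1 - 1)" by (rule PS_cmult)
      also have "\<dots> = (1 - pp n) * (1 - pp n) ^ (j - 1 - 1)" using xn by (simp only: P_HH HH_low) simp
      also have "\<dots> = (1 - pp n) ^ (j - 1)"
      proof -
        have "Suc (j - 1 - 1) = j - 1" using \<open>j - 1 \<noteq> 0\<close> by simp
        then show ?thesis by (metis power_Suc)
      qed
      finally show ?thesis using xn \<open>j \<noteq> 0\<close> by (simp add: VV_def HH_low)
    qed
  next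
    case False
    have "PS x (\<lambda>y. VV n y j) = PS x (\<lambda>y. HH n y * (1 - pp n) ^ (j - 1))"
      using \<open>j \<noteq> 0\<close> by (simp add: VV_def)
    also have "\<dots> = PS x (HH n) * (1 - pp n) ^ (j - 1)" by (rule PS_cmult)
    also have "\<dots> = HH n x * (1 - pp n) ^ (j - 1)" using False by (simp only: P_HH) simp
    finally show ?thesis using False \<open>j \<noteq> 0\<close> by (simp add: VV_def)
  qed
qed

lemma QQ_le_VV: "QQ n T x j \<le> VV n x j"
proof (induction T arbitrary: x j)
  case 0
  show ?case
  proof (cases "j \<le> (if x = n then 1 else 0)")
    case True
    then have "j = 0 \<or> (j = 1 \<and> x = n)" by (auto split: if_splits)
    then show ?thesis using True by (auto simp: QQ_0 VV_def HH_low)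
  next
    case False then show ?thesis using VV_range[of n x j] by (simp add: QQ_0)
  qed
next
  case (Suc T)
  have "QQ n (Suc T) x j \<le> PS x (\<lambda>y. VV n y (j - (if x = n then 1 else 0)))"
    unfolding QQ_Suc by (rule PS_mono) (rule Suc.IH)
  then show ?case by (simp only: VV_harm)
qed

lemma QQ_nonneg: "QQ n T x j \<ge> 0"
proof (induction T arbitrary: x j)
  case 0 then show ?case by (simp add: QQ_0)
next
  case (Suc T) then show ?case unfolding QQ_Suc by (intro PS_nonneg)
qed

lemma QQ_ge: "VV n x j - QQ n T x j \<le> PT T (HH n) x"
proof (induction T arbitrary: x j)
  case 0
  show ?case
  proof (cases "j = 0")
    case True then show ?thesis using HH_range[of n x] by (simp add: QQ_0 VV_def)
  next
    case False
    then show ?thesis using VV_le_HH[of j n x] QQ_nonneg[of n 0 x j] by simp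
  qed
next
  case (Suc T)
  let ?j = "j - (if x = n then 1 else 0)"
  have "VV n x j - QQ n (Suc T) x j = PS x (\<lambda>y. VV n y ?j) - PS x (\<lambda>y. QQ n T y ?j)"
    by (simp only: VV_harm QQ_Suc)
  also have "\<dots> = PS x (\<lambda>y. VV n y ?j - QQ n T y ?j)" by (rule PS_diff[symmetric])
  also have "\<dots> \<le> PS x (PT T (HH n))" by (rule PS_mono) (rule Suc.IH)
  finally show ?case by simp
qed

lemma QQ_tendsto: "(\<lambda>T. QQ n T 0 k) \<longlonglongrightarrow> VV n 0 k"
proof (rule tendsto_sandwich[where f = "\<lambda>T. VV n 0 k - PT T (HH n) 0" and h = "\<lambda>T. VV n 0 k"])
  show "\<forall>\<^sub>F T in sequentially. VV n 0 k - PT T (HH n) 0 \<le> QQ n T 0 k"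
    using QQ_ge[of n 0 k] by (auto intro!: always_eventually simp: algebra_simps)
  show "\<forall>\<^sub>F T in sequentially. QQ n T 0 k \<le> VV n 0 k"
    using QQ_le_VV by (auto intro!: always_eventually)
  show "(\<lambda>T. VV n 0 k - PT T (HH n) 0) \<longlonglongrightarrow> VV n 0 k"
    using tendsto_diff[OF tendsto_const PT_HH_tendsto[of n 0]] by simp
qed simp

lemma VV_0: "k \<ge> 1 \<Longrightarrow> VV n 0 k = (1 - pp n) ^ (k - 1)"
  by (simp add: VV_def HH_low)

lemma QQ_total: "QQ n T x 0 = 1"
  using QQ_le_VV[of n T x 0] QQ_ge[of n x 0 T]
proof (induction T arbitrary: x)
  case 0 then show ?case by (simp add: QQ_0)
next
  case (Suc T)
  have "QQ n (Suc T) x 0 = PS x (\<lambda>y. QQ n T y 0)" by (simp add: QQ_Suc)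
  also have "\<dots> = PS x (\<lambda>y. 1)" using Suc.IH QQ_le_VV QQ_ge by (simp del: sum.lessThan_Suc)
  also have "\<dots> = 1" by (rule P_const)
  finally show ?case .
qed



declare upt_Suc[simp del]

definition cyl :: "'a measure \<Rightarrow> (nat \<Rightarrow> 'a \<Rightarrow> nat) \<Rightarrow> nat list \<Rightarrow> 'a set" where
  "cyl \<Omega> X xs = {\<omega> \<in> space \<Omega>. \<forall>i<length xs. X i \<omega> = xs ! i}"

lemma bc_facts:
  assumes "boundary_chain \<Omega> X"
  shows "prob_space \<Omega>" "\<And>t. X t \<in> measurable \<Omega> (count_space UNIV)"
    "measure \<Omega> {\<omega> \<in> space \<Omega>. X 0 \<omega> = 0} = 1"
    "\<And>t xs y. length xs = Suc t \<Longrightarrow>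
        measure \<Omega> {\<omega> \<in> space \<Omega>. (\<forall>i\<le>t. X i \<omega> = xs ! i) \<and> X (Suc t) \<omega> = y}
        = measure \<Omega> {\<omega> \<in> space \<Omega>. \<forall>i\<le>t. X i \<omega> = xs ! i} * bmc_trans (xs ! t) y"
  using assms unfolding boundary_chain_def by auto

lemma cyl_sets:
  assumes "boundary_chain \<Omega> X" shows "cyl \<Omega> X xs \<in> sets \<Omega>"
proof -
  have [measurable]: "X i \<in> measurable \<Omega> (count_space UNIV)" for i using bc_facts(2)[OF assms] .
  show ?thesis unfolding cyl_def by measurable
qed

lemma ev_sets:
  assumes "boundary_chain \<Omega> X" shows "{\<omega> \<in> space \<Omega>. k \<le> cnt n (map (\<lambda>i. X i \<omega>) [0..<Suc T])} \<in> sets \<Omega>"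
proof -
  have [measurable]: "X i \<in> measurable \<Omega> (count_space UNIV)" for i using bc_facts(2)[OF assms] .
  have "{\<omega> \<in> space \<Omega>. k \<le> cnt n (map (\<lambda>i. X i \<omega>) [0..<Suc T])}
      = {\<omega> \<in> space \<Omega>. \<exists>xs::nat list. length xs = Suc T \<and> k \<le> cnt n xs \<and> (\<forall>i<Suc T. X i \<omega> = xs ! i)}"
  proof safe
    fix \<omega> assume "\<omega> \<in> space \<Omega>" "k \<le> cnt n (map (\<lambda>i. X i \<omega>) [0..<Suc T])"
    then show "\<exists>xs::nat list. length xs = Suc T \<and> k \<le> cnt n xs \<and> (\<forall>i<Suc T. X i \<omega> = xs ! i)"
      by (intro exI[of _ "map (\<lambda>i. X i \<omega>) [0..<Suc T]"]) (auto simp del: upt_Suc)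
  next
    fix \<omega> xs assume h: "length xs = Suc T" "k \<le> cnt n xs" "\<forall>i<Suc T. X i \<omega> = xs ! i"
    then have "map (\<lambda>i. X i \<omega>) [0..<Suc T] = xs" by (intro nth_equalityI) auto
    then show "k \<le> cnt n (map (\<lambda>i. X i \<omega>) [0..<Suc T])" using h by simp
  qed
  also have "\<dots> \<in> sets \<Omega>" by measurable
  finally show ?thesis .
qed


lemma wt_snoc: "xs \<noteq> [] \<Longrightarrow> wt (xs @ [y]) = wt xs * bmc_trans (last xs) y"
proof (induction xs)
  case Nil then show ?case by simp
next
  case (Cons a xs)
  show ?case
  proof (cases "xs = []")
    case True then show ?thesis by simp
  next
    case False
    have "wt ((a # xs) @ [y]) = bmc_trans a (hd (xs @ [y])) * wt (xs @ [y])"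
      by (simp add: wt_Cons)
    also have "\<dots> = bmc_trans a (hd xs) * (wt xs * bmc_trans (last xs) y)"
      using False Cons.IH by simp
    also have "\<dots> = wt (a # xs) * bmc_trans (last (a # xs)) y"
      using False by (simp add: wt_Cons)
    finally show ?thesis .
  qed
qed

lemma cyl_measure:
  assumes bc: "boundary_chain \<Omega> X"
  shows "xs \<noteq> [] \<Longrightarrow> measure \<Omega> (cyl \<Omega> X xs) = (if hd xs = 0 then wt xs else 0)"
proof (induction xs rule: rev_induct)
  case Nil then show ?case by simp
next
  case (snoc y xs)
  interpret prob_space \<Omega> using bc_facts(1)[OF bc] .
  show ?case
  proof (cases "xs = []")
    case True
    have c: "cyl \<Omega> X (xs @ [y]) = {\<omega> \<in> space \<Omega>. X 0 \<omega> = y}" using True by (auto simp: cyl_def)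
    have m0: "measure \<Omega> {\<omega> \<in> space \<Omega>. X 0 \<omega> = 0} = 1" by (rule bc_facts(3)[OF bc])
    show ?thesis
    proof (cases "y = 0")
      case True then show ?thesis using c m0 \<open>xs = []\<close> by simp
    next
      case False
      have s0: "{\<omega> \<in> space \<Omega>. X 0 \<omega> = 0} \<in> sets \<Omega>"
        using cyl_sets[OF bc, of "[0]"] by (simp add: cyl_def)
      have "{\<omega> \<in> space \<Omega>. X 0 \<omega> = y} \<subseteq> space \<Omega> - {\<omega> \<in> space \<Omega>. X 0 \<omega> = 0}" using False by auto
      then have "measure \<Omega> {\<omega> \<in> space \<Omega>. X 0 \<omega> = y} \<le> measure \<Omega> (space \<Omega> - {\<omega> \<in> space \<Omega>. X 0 \<omega> = 0})"
        using s0 by (intro finite_measure_mono) auto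
      also have "\<dots> = 0" using prob_compl[OF s0] m0 by simp
      finally show ?thesis using c False True by (simp add: measure_nonneg antisym)
    qed
  next
    case False
    obtain t where t: "length xs = Suc t" using False by (cases xs) auto
    have c1: "cyl \<Omega> X (xs @ [y]) = {\<omega> \<in> space \<Omega>. (\<forall>i\<le>t. X i \<omega> = xs ! i) \<and> X (Suc t) \<omega> = y}"
    proof -
      have "(\<forall>i<length (xs @ [y]). X i \<omega> = (xs @ [y]) ! i) \<longleftrightarrow> (\<forall>i\<le>t. X i \<omega> = xs ! i) \<and> X (Suc t) \<omega> = y" for \<omega>
      proof -
        have "(\<forall>i<length (xs @ [y]). X i \<omega> = (xs @ [y]) ! i) \<longleftrightarrow> (\<forall>i<Suc (Suc t). X i \<omega> = (xs @ [y]) ! i)"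
          using t by simp
        also have "\<dots> \<longleftrightarrow> (\<forall>i<Suc t. X i \<omega> = (xs @ [y]) ! i) \<and> X (Suc t) \<omega> = (xs @ [y]) ! Suc t"
          by (simp add: less_Suc_eq all_conj_distrib)
        also have "\<dots> \<longleftrightarrow> (\<forall>i\<le>t. X i \<omega> = xs ! i) \<and> X (Suc t) \<omega> = y"
          using t by (simp add: nth_append less_Suc_eq_le)
        finally show ?thesis .
      qed
      then show ?thesis unfolding cyl_def by blast
    qed
    have c2: "cyl \<Omega> X xs = {\<omega> \<in> space \<Omega>. \<forall>i\<le>t. X i \<omega> = xs ! i}"
      unfolding cyl_def t by (simp add: less_Suc_eq_le)
    have "measure \<Omega> (cyl \<Omega> X (xs @ [y])) = measure \<Omega> (cyl \<Omega> X xs) * bmc_trans (xs ! t) y"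
      unfolding c1 c2 by (rule bc_facts(4)[OF bc t])
    also have "xs ! t = last xs" using t False by (simp add: last_conv_nth)
    finally show ?thesis using snoc.IH[OF False] False by (simp add: wt_snoc)
  qed
qed


lemma path_of_cyl:
  assumes "\<omega> \<in> cyl \<Omega> X xs" "length xs = Suc T"
  shows "map (\<lambda>i. X i \<omega>) [0..<Suc T] = xs"
  using assms by (intro nth_equalityI) (auto simp: cyl_def)

lemma cyl_disjoint:
  assumes "length xs = length ys" "xs \<noteq> ys"
  shows "cyl \<Omega> X xs \<inter> cyl \<Omega> X ys = {}"
proof -
  obtain i where "i < length xs" "xs ! i \<noteq> ys ! i" using assms nth_equalityI by blast
  then show ?thesis using assms(1) by (auto simp: cyl_def)
qed

lemma event_measure:
  assumes bc: "boundary_chain \<Omega> X"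
  shows "measure \<Omega> {\<omega> \<in> space \<Omega>. k \<le> cnt n (map (\<lambda>i. X i \<omega>) [0..<Suc T])} = QQ n T 0 k"
proof -
  interpret prob_space \<Omega> using bc_facts(1)[OF bc] .
  define A where "A = {\<omega> \<in> space \<Omega>. k \<le> cnt n (map (\<lambda>i. X i \<omega>) [0..<Suc T])}"
  define U where "U = (\<Union>xs\<in>Paths 0 T. cyl \<Omega> X xs)"
  have A_sets: "A \<in> sets \<Omega>" unfolding A_def by (rule ev_sets[OF bc])
  have cyl_s: "cyl \<Omega> X xs \<in> sets \<Omega>" for xs by (rule cyl_sets[OF bc])
  have disj: "disjoint_family_on (cyl \<Omega> X) (Paths 0 T)"
    unfolding disjoint_family_on_def using Paths_shape cyl_disjoint by metis
  have U_sets: "U \<in> sets \<Omega>" unfolding U_def using Paths_finite cyl_s by blast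
  have mU: "measure \<Omega> U = 1"
  proof -
    have "measure \<Omega> U = (\<Sum>xs\<in>Paths 0 T. measure \<Omega> (cyl \<Omega> X xs))"
      unfolding U_def by (rule finite_measure_finite_Union) (use Paths_finite cyl_s disj in auto)
    also have "\<dots> = (\<Sum>xs\<in>Paths 0 T. wt xs * (if 0 \<le> cnt n xs then 1 else 0))"
      by (rule sum.cong) (use Paths_shape cyl_measure[OF bc] in auto)
    also have "\<dots> = 1" using QQ_total[of n T 0] by (simp add: QQ_def)
    finally show ?thesis .
  qed
  have mAU: "measure \<Omega> (A - U) = 0"
  proof -
    have "measure \<Omega> (A - U) \<le> measure \<Omega> (space \<Omega> - U)"
      using A_sets U_sets sets.sets_into_space by (intro finite_measure_mono) auto
    also have "\<dots> = 0" using prob_compl[OF U_sets] mU by simp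
    finally show ?thesis by (simp add: measure_nonneg antisym)
  qed
  have "measure \<Omega> A = measure \<Omega> ((A \<inter> U) \<union> (A - U))" by (metis Int_Diff_Un)
  also have "\<dots> = measure \<Omega> (A \<inter> U) + measure \<Omega> (A - U)"
    using A_sets U_sets by (intro finite_measure_Union) auto
  also have "A \<inter> U = (\<Union>xs\<in>Paths 0 T. A \<inter> cyl \<Omega> X xs)" unfolding U_def by blast
  also have "measure \<Omega> \<dots> = (\<Sum>xs\<in>Paths 0 T. measure \<Omega> (A \<inter> cyl \<Omega> X xs))"
  proof (rule finite_measure_finite_Union)
    show "finite (Paths 0 T)" by (rule Paths_finite)
    show "(\<lambda>xs. A \<inter> cyl \<Omega> X xs) ` Paths 0 T \<subseteq> sets \<Omega>" using A_sets cyl_s by auto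
    show "disjoint_family_on (\<lambda>xs. A \<inter> cyl \<Omega> X xs) (Paths 0 T)"
      using disj unfolding disjoint_family_on_def by blast
  qed
  also have "\<dots> = (\<Sum>xs\<in>Paths 0 T. wt xs * (if k \<le> cnt n xs then 1 else 0))"
  proof (rule sum.cong)
    fix xs assume xs: "xs \<in> Paths 0 T"
    then have sh: "xs \<noteq> []" "hd xs = 0" "length xs = Suc T" using Paths_shape by auto
    have "A \<inter> cyl \<Omega> X xs = (if k \<le> cnt n xs then cyl \<Omega> X xs else {})"
      using path_of_cyl[OF _ sh(3), of _ \<Omega> X] unfolding A_def by (auto simp: cyl_def)
    then show "measure \<Omega> (A \<inter> cyl \<Omega> X xs) = wt xs * (if k \<le> cnt n xs then 1 else 0)"
      using cyl_measure[OF bc sh(1)] sh(2) by simp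
  qed simp
  finally show ?thesis using mAU unfolding A_def QQ_def by simp
qed

lemma cnt_append: "cnt n (xs @ ys) = cnt n xs + cnt n ys"
  by (induction xs) auto

lemma cnt_map: "cnt n (map f [0..<m]) = card {i. i < m \<and> f i = n}"
proof (induction m)
  case 0 then show ?case by simp
next
  case (Suc m)
  have s: "{i. i < Suc m \<and> f i = n} = {i. i < m \<and> f i = n} \<union> (if f m = n then {m} else {})"
    by (auto simp: less_Suc_eq)
  show ?case using Suc by (simp add: upt_Suc cnt_append s)
qed



lemma setid:
  fixes S :: "nat set"
  assumes k: "k \<ge> 1"
  shows "(finite S \<and> card S = k) \<longleftrightarrow>
         (\<exists>T. k \<le> card {i. i < Suc T \<and> i \<in> S}) \<and> \<not> (\<exists>T. Suc k \<le> card {i. i < Suc T \<and> i \<in> S})"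
proof
  assume h: "finite S \<and> card S = k"
  then have ne: "S \<noteq> {}" using k by auto
  have "card {i. i < Suc T \<and> i \<in> S} \<le> k" for T
    using h by (metis (no_types, lifting) card_mono mem_Collect_eq subsetI)
  moreover have "{i. i < Suc (Max S) \<and> i \<in> S} = S" using h ne by (auto simp: less_Suc_eq_le)
  ultimately show "(\<exists>T. k \<le> card {i. i < Suc T \<and> i \<in> S}) \<and> \<not> (\<exists>T. Suc k \<le> card {i. i < Suc T \<and> i \<in> S})"
    using h by (metis not_less_eq_eq order_refl)
next
  assume h: "(\<exists>T. k \<le> card {i. i < Suc T \<and> i \<in> S}) \<and> \<not> (\<exists>T. Suc k \<le> card {i. i < Suc T \<and> i \<in> S})"
  have fin: "finite S"
  proof (rule ccontr)
    assume "infinite S"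
    then obtain B where B: "B \<subseteq> S" "finite B" "card B = Suc k" using infinite_arbitrarily_large by blast
    then have ne: "B \<noteq> {}" by auto
    have "B \<subseteq> {i. i < Suc (Max B) \<and> i \<in> S}" using B by (auto simp: less_Suc_eq_le)
    then have "Suc k \<le> card {i. i < Suc (Max B) \<and> i \<in> S}" using B by (metis card_mono finite_Collect_less_nat finite_Collect_conjI)
    then show False using h by blast
  qed
  obtain T where T: "k \<le> card {i. i < Suc T \<and> i \<in> S}" using h by blast
  have "card {i. i < Suc T \<and> i \<in> S} \<le> card S" using fin by (intro card_mono) auto
  then have ne: "S \<noteq> {}" using T k by auto
  have "{i. i < Suc (Max S) \<and> i \<in> S} = S" using fin ne by (auto simp: less_Suc_eq_le)
  then have "card S \<le> k" using h by (metis not_less_eq_eq)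
  then show "finite S \<and> card S = k" using fin T \<open>card {i. i < Suc T \<and> i \<in> S} \<le> card S\<close> by simp
qed

lemma desc_fact_Suc: "desc_fact (x + 1) (Suc k) = (x + 1) * desc_fact x k"
  unfolding desc_fact_def prod.lessThan_Suc_shift by (simp add: algebra_simps)

lemma visit_mean_hh: "visit_mean n = 3/2 * hh n"
proof (induction n)
  case 0 then show ?case by (simp add: visit_mean_def desc_fact_def hh_0)
next
  case (Suc n)
  define D where "D = desc_fact (real n + 3/2) (n + 1) / fact (n + 1)"
  have vm: "visit_mean n = (3 * real n + 3) / (2 * real n + 3) * D"
    unfolding visit_mean_def D_def by simp
  have "desc_fact (real (Suc n) + 3/2) (Suc n + 1) = (real n + 5/2) * desc_fact (real n + 3/2) (n + 1)"
    using desc_fact_Suc[of "real n + 3/2" "n + 1"] by (simp add: algebra_simps)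
  then have vm2: "visit_mean (Suc n) = (3 * real n + 6) / (2 * real n + 5) * ((real n + 5/2) / (real n + 2) * D)"
    unfolding visit_mean_def D_def by (simp add: algebra_simps)
  have p: "2 * real n + 5 > 0" "real n + 2 > 0" "2 * real n + 3 > 0" "2 * real n + 2 > 0" by linarith+
  obtain u v a b where u: "u = real n + 2" and v: "v = 2 * real n + 5" and a: "a = 2 * real n + 3" and b: "b = real n + 1" by blast
  have pos: "u > 0" "v > 0" "a > 0" "b > 0" using u v a b by linarith+
  have "visit_mean (Suc n) = 3/2 * D"
  proof -
    have e: "3 * real n + 6 = 3 * u" "real n + 5/2 = v / 2" "2 * real n + 5 = v" "real n + 2 = u" using u v by auto
    have "(3 * u) / v * ((v / 2) / u) = 3/2" using pos by (simp add: field_simps)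
    then have "(3 * real n + 6) / (2 * real n + 5) * ((real n + 5/2) / (real n + 2)) = 3/2" unfolding e .
    then show ?thesis unfolding vm2 by (metis mult.assoc)
  qed
  also have "\<dots> = visit_mean n * (2 * real n + 3) / (2 * real n + 2)"
  proof -
    have e: "3 * real n + 3 = 3 * b" "2 * real n + 3 = a" "2 * real n + 2 = 2 * b" using a b by auto
    have "3/2 * D = (3 * b) / a * D * a / (2 * b)" using pos by (simp add: field_simps)
    then show ?thesis unfolding vm e .
  qed
  also have "\<dots> = 3/2 * hh (Suc n)" unfolding Suc.IH hh_Suc by simp
  finally show ?case .
qed



definition bq :: "nat \<Rightarrow> real" where "bq n = hh n ^ 2 / (real n + 1)"
definition dq :: "nat \<Rightarrow> real" where "dq n = hh n ^ 2 / (2 * real n + 1)"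

lemma bq_mono: "bq n \<le> bq (Suc n)"
proof -
  obtain H u w where H: "H = hh n" and u: "u = real n + 1" and w: "w = real n + 2" by blast
  have pos: "u > 0" "w > 0" using u w by linarith+
  have w': "w = u + 1" using u w by simp
  have hs: "hh (Suc n) = H * (2 * u + 1) / (2 * u)" using H u by (simp add: hh_Suc algebra_simps)
  have "H ^ 2 * (2 * u + 1) ^ 2 / (4 * u ^ 2 * w) - H ^ 2 / u = H ^ 2 / (4 * u ^ 2 * w)"
    using pos apply (simp add: field_simps) apply (unfold w') apply (simp add: algebra_simps eval_nat_numeral) done
  moreover have "H ^ 2 / (4 * u ^ 2 * w) \<ge> 0" using pos by simp
  moreover have "bq (Suc n) = H ^ 2 * (2 * u + 1) ^ 2 / (4 * u ^ 2 * w)"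
  proof -
    obtain z where z: "z = 2 * u + 1" by blast
    have zp: "z > 0" using z pos by simp
    have e: "real (Suc n) + 1 = w" using w by simp
    have "bq (Suc n) = (H * (2 * u + 1) / (2 * u)) ^ 2 / (real (Suc n) + 1)" unfolding bq_def hs ..
    also have "\<dots> = (H * z / (2 * u)) ^ 2 / w" unfolding z e ..
    also have "\<dots> = H ^ 2 * z ^ 2 / (4 * u ^ 2 * w)" using pos zp
      by (simp add: power2_eq_square field_simps)
    also have "\<dots> = H ^ 2 * (2 * u + 1) ^ 2 / (4 * u ^ 2 * w)" unfolding z ..
    finally show ?thesis .
  qed
  moreover have "bq n = H ^ 2 / u" unfolding bq_def H u ..
  ultimately show ?thesis by linarith
qed

lemma dq_mono: "dq (Suc n) \<le> dq n"
proof -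
  obtain H u v where H: "H = hh n" and u: "u = real n + 1" and v: "v = 2 * real n + 1" by blast
  have pos: "u > 0" "v > 0" using u v by linarith+
  have v': "v = 2 * u - 1" using u v by simp
  have hs: "hh (Suc n) = H * (2 * u + 1) / (2 * u)" using H u by (simp add: hh_Suc algebra_simps)
  have "H ^ 2 / v - H ^ 2 * (2 * u + 1) / (4 * u ^ 2) = H ^ 2 / (v * 4 * u ^ 2)"
    using pos apply (simp add: field_simps) apply (unfold v') apply (simp add: algebra_simps power2_eq_square) done
  moreover have "H ^ 2 / (v * 4 * u ^ 2) \<ge> 0" using pos by simp
  moreover have "dq (Suc n) = H ^ 2 * (2 * u + 1) / (4 * u ^ 2)"
  proof -
    have e: "2 * real (Suc n) + 1 = 2 * u + 1" using u by simp
    obtain z where z: "z = 2 * u + 1" by blast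
    have zp: "z > 0" using z pos by simp
    have "dq (Suc n) = (H * (2 * u + 1) / (2 * u)) ^ 2 / (2 * u + 1)" unfolding dq_def hs e ..
    also have "\<dots> = (H * z / (2 * u)) ^ 2 / z" unfolding z ..
    also have "\<dots> = H ^ 2 * z / (4 * u ^ 2)" using pos zp
      by (simp add: power2_eq_square field_simps)
    also have "\<dots> = H ^ 2 * (2 * u + 1) / (4 * u ^ 2)" unfolding z ..
    finally show ?thesis .
  qed
  moreover have "dq n = H ^ 2 / v" unfolding dq_def H v ..
  ultimately show ?thesis by linarith
qed

lemma bq_le: "bq n \<le> 2"
proof -
  have "dq n \<le> dq 0" using dq_mono by (induction n) (auto intro: order_trans)
  then have d: "dq n \<le> 1" by (simp add: dq_def hh_0)
  have "bq n \<le> 2 * dq n"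
  proof -
    have "hh n ^ 2 / (real n + 1) \<le> hh n ^ 2 / ((2 * real n + 1) / 2)"
      by (intro divide_left_mono) auto
    then show ?thesis by (simp add: bq_def dq_def field_simps)
  qed
  then show ?thesis using d by linarith
qed

lemma hh_asymp: "\<exists>L > 0. (\<lambda>n. hh n / sqrt (real n)) \<longlonglongrightarrow> L"
proof -
  have inc: "incseq bq" by (rule incseq_SucI) (rule bq_mono)
  have bdd: "bdd_above (range bq)" by (rule bdd_aboveI2[where M = 2]) (rule bq_le)
  define L where "L = (SUP i. bq i)"
  have lim: "bq \<longlonglongrightarrow> L" unfolding L_def by (rule LIMSEQ_incseq_SUP[OF bdd inc])
  have L1: "L \<ge> 1"
  proof -
    have "bq 0 \<le> L" unfolding L_def by (rule cSUP_upper[OF _ bdd]) simp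
    then show ?thesis by (simp add: bq_def hh_0)
  qed
  have "(\<lambda>n. sqrt (bq n * (real (Suc n) / real n))) \<longlonglongrightarrow> sqrt (L * 1)"
    by (intro tendsto_real_sqrt tendsto_mult lim LIMSEQ_Suc_n_over_n)
  moreover have "\<forall>\<^sub>F n in sequentially. sqrt (bq n * (real (Suc n) / real n)) = hh n / sqrt (real n)"
  proof (rule eventually_sequentiallyI[of 1])
    fix n :: nat assume n: "n \<ge> 1"
    have "bq n * (real (Suc n) / real n) = hh n ^ 2 / real n"
    proof -
      obtain a b where a: "a = real n" and b: "b = real n + 1" by blast
      have ab: "a > 0" "b > 0" using a b n by auto
      have "hh n ^ 2 / b * (b / a) = hh n ^ 2 / a" using ab by (simp add: field_simps)
      moreover have e: "real (Suc n) = b" "real n + 1 = b" "real n = a" using a b by auto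
      ultimately show ?thesis unfolding bq_def e by simp
    qed
    then have "sqrt (bq n * (real (Suc n) / real n)) = sqrt (hh n ^ 2) / sqrt (real n)"
      by (simp only: real_sqrt_divide)
    also have "sqrt (hh n ^ 2) = hh n" using hh_pos[of n] by simp
    finally show "sqrt (bq n * (real (Suc n) / real n)) = hh n / sqrt (real n)" .
  qed
  ultimately have "(\<lambda>n. hh n / sqrt (real n)) \<longlonglongrightarrow> sqrt L"
    using Lim_transform_eventually by fastforce
  moreover have "sqrt L > 0" using L1 by simp
  ultimately show ?thesis by blast
qed

lemma visit_mean_asymp: "\<exists>c::real. c > 0 \<and> visit_mean \<sim>[at_top] (\<lambda>n. c * sqrt (real n))"
proof -
  obtain L where L: "L > 0" "(\<lambda>n. hh n / sqrt (real n)) \<longlonglongrightarrow> L" using hh_asymp by blast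
  define c where "c = 3/2 * L"
  have "(\<lambda>n. visit_mean n / (c * sqrt (real n))) \<longlonglongrightarrow> L / L"
  proof -
    have "(\<lambda>n. (hh n / sqrt (real n)) / L) \<longlonglongrightarrow> L / L"
      using L by (intro tendsto_divide) auto
    moreover have "visit_mean n / (c * sqrt (real n)) = (hh n / sqrt (real n)) / L" for n
      unfolding visit_mean_hh c_def using L by (simp add: field_simps)
    ultimately show ?thesis by simp
  qed
  then have "(\<lambda>n. visit_mean n / (c * sqrt (real n))) \<longlonglongrightarrow> 1" using L by simp
  then have "visit_mean \<sim>[at_top] (\<lambda>n. c * sqrt (real n))" by (rule asymp_equivI')
  moreover have "c > 0" using L by (simp add: c_def)
  ultimately show ?thesis by blast
qed



lemma part1:
  assumes bc: "boundary_chain \<Omega> X" and k: "k \<ge> 1"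
  shows "measure \<Omega> {\<omega> \<in> space \<Omega>. finite {t. X t \<omega> = n} \<and> card {t. X t \<omega> = n} = k}
         = pp n * (1 - pp n) ^ (k - 1)"
proof -
  interpret prob_space \<Omega> using bc_facts(1)[OF bc] .
  define A where "A = (\<lambda>j T. {\<omega> \<in> space \<Omega>. j \<le> cnt n (map (\<lambda>i. X i \<omega>) [0..<Suc T])})"
  define B where "B = (\<lambda>j. \<Union>T. A j T)"
  have A_sets: "A j T \<in> sets \<Omega>" for j T unfolding A_def by (rule ev_sets[OF bc])
  have A_alt: "A j T = {\<omega> \<in> space \<Omega>. j \<le> card {i. i < Suc T \<and> X i \<omega> = n}}" for j T
    unfolding A_def cnt_map ..
  have inc: "incseq (A j)" for j
  proof (rule incseq_SucI)
    fix T
    show "A j T \<subseteq> A j (Suc T)" unfolding A_alt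
    proof safe
      fix \<omega> assume "\<omega> \<in> space \<Omega>" "j \<le> card {i. i < Suc T \<and> X i \<omega> = n}"
      moreover have "card {i. i < Suc T \<and> X i \<omega> = n} \<le> card {i. i < Suc (Suc T) \<and> X i \<omega> = n}"
        by (intro card_mono) auto
      ultimately show "j \<le> card {i. i < Suc (Suc T) \<and> X i \<omega> = n}" by linarith
    qed
  qed
  have mB: "measure \<Omega> (B j) = (1 - pp n) ^ (j - 1)" if j: "j \<ge> 1" for j
  proof -
    have "(\<lambda>T. measure \<Omega> (A j T)) \<longlonglongrightarrow> measure \<Omega> (B j)"
      unfolding B_def by (rule finite_Lim_measure_incseq) (use A_sets inc in auto)
    moreover have "(\<lambda>T. measure \<Omega> (A j T)) \<longlonglongrightarrow> (1 - pp n) ^ (j - 1)"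
      unfolding A_def event_measure[OF bc] using QQ_tendsto[of n j] VV_0[OF j, of n] by simp
    ultimately show ?thesis by (rule LIMSEQ_unique)
  qed
  have B_sets: "B j \<in> sets \<Omega>" for j unfolding B_def using A_sets by blast
  have sub: "B (Suc k) \<subseteq> B k" unfolding B_def A_def by auto
  have eq: "{\<omega> \<in> space \<Omega>. finite {t. X t \<omega> = n} \<and> card {t. X t \<omega> = n} = k} = B k - B (Suc k)"
  proof -
    have "finite {t. X t \<omega> = n} \<and> card {t. X t \<omega> = n} = k \<longleftrightarrow>
          (\<exists>T. k \<le> card {i. i < Suc T \<and> X i \<omega> = n}) \<and> \<not> (\<exists>T. Suc k \<le> card {i. i < Suc T \<and> X i \<omega> = n})" for \<omega>
      using setid[OF k, of "{t. X t \<omega> = n}"] by simp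
    then show ?thesis unfolding B_def A_alt by auto
  qed
  have "measure \<Omega> (B k - B (Suc k)) = measure \<Omega> (B k) - measure \<Omega> (B (Suc k))"
    by (rule finite_measure_Diff[OF B_sets B_sets sub])
  also have "\<dots> = (1 - pp n) ^ (k - 1) - (1 - pp n) ^ k" using mB[OF k] mB[of "Suc k"] by simp
  also have "\<dots> = pp n * (1 - pp n) ^ (k - 1)"
  proof -
    have "(1 - pp n) ^ k = (1 - pp n) * (1 - pp n) ^ (k - 1)" using k
      by (metis Suc_diff_1 less_le_trans power_Suc zero_less_one)
    then show ?thesis by (simp add: algebra_simps)
  qed
  finally show ?thesis unfolding eq .
qed

theorem claim3p4:
  fixes \<Omega> :: "'a measure" and X :: "nat \<Rightarrow> 'a \<Rightarrow> nat"
  assumes "boundary_chain \<Omega> X"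
  shows "(\<forall>n::nat. \<exists>p::real. 0 < p \<and> p \<le> 1 \<and> 1 / p = visit_mean n \<and>
            (\<forall>k::nat. k \<ge> 1 \<longrightarrow>
               measure \<Omega> {\<omega> \<in> space \<Omega>. finite {t. X t \<omega> = n} \<and> card {t. X t \<omega> = n} = k}
               = p * (1 - p) ^ (k - 1)))
       \<and> (\<exists>c::real. c > 0 \<and> visit_mean \<sim>[at_top] (\<lambda>n. c * sqrt (real n)))"
proof
  show "\<forall>n::nat. \<exists>p::real. 0 < p \<and> p \<le> 1 \<and> 1 / p = visit_mean n \<and>
            (\<forall>k::nat. k \<ge> 1 \<longrightarrow>
               measure \<Omega> {\<omega> \<in> space \<Omega>. finite {t. X t \<omega> = n} \<and> card {t. X t \<omega> = n} = k}
               = p * (1 - p) ^ (k - 1))"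
  proof
    fix n :: nat
    have "1 / pp n = visit_mean n" using hh_pos[of n] by (simp add: pp_def visit_mean_hh)
    then show "\<exists>p::real. 0 < p \<and> p \<le> 1 \<and> 1 / p = visit_mean n \<and>
            (\<forall>k::nat. k \<ge> 1 \<longrightarrow>
               measure \<Omega> {\<omega> \<in> space \<Omega>. finite {t. X t \<omega> = n} \<and> card {t. X t \<omega> = n} = k}
               = p * (1 - p) ^ (k - 1))"
      using pp_range[of n] part1[OF assms] by blast
  qed
  show "\<exists>c::real. c > 0 \<and> visit_mean \<sim>[at_top] (\<lambda>n. c * sqrt (real n))" by (rule visit_mean_asymp)
qed

end
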